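(* Let $(V,F)$ be a near vector space with $(F,\circ)$ commutative, and let $u,v\in Q(V)\setminus\{0\}$. Suppose that for all $n\geq1$ and all $\alpha_1,\dots,\alpha_n\in F$, $$\alpha_1+_u\cdots+_u\alpha_n=0 \iff \alpha_1+_v\cdots+_v\alpha_n=0.$$ Then $+_u=+_v$. (Thus the addition $+_u$ is completely determined by which finite $+_u$-sums of elements of $F$ are zero.)
   Context: An F-group is a pair $(V,F)$ where $(V,+)$ is a group and $F$ is a set of endomorphisms of $V$ such that: the maps $0,1,-1$ lie in $F$; $F\setminus\{0\}$ is a subgroup of $\mathrm{Aut}(V,+)$ under composition; and if $\alpha x=\beta x$ with $\alpha,\beta\in F$, $x\in V$ then $\alpha=\beta$ or $x=0$. The quasi-kernel $Q(V)$ is the set of $u\in V$ such that for all $\alpha,\beta\in F$ there is $\gamma\in F$ with $\alpha u+\beta u=\gamma u$. $(V,F)$ is a near vector space if $Q(V)$ generates $(V,+)$. Commutativity means $\alpha(\beta v)=\beta(\alpha v)$ for all $\alpha,\beta\in F$, $v\in V$. For $u\in Q(V)\setminus\{0\}$, $\alpha+_u\beta$ is the unique $\gamma\in F$ with $\alpha u+\beta u=\gamma u$; $(F,+_u,\circ)$ is a field. *)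

theory Defs
  imports Main
begin

text \<open>The additive group (V,+) is modelled by a type of class group_add (not necessarily
abelian); F is a set of maps V \<Rightarrow> V.\<close>

definition zero_map :: "'a::group_add \<Rightarrow> 'a" where
  "zero_map = (\<lambda>x. 0)"

definition endo :: "('a::group_add \<Rightarrow> 'a) \<Rightarrow> bool" where
  "endo f \<longleftrightarrow> (\<forall>x y. f (x + y) = f x + f y)"

definition aut_subgroup :: "('a::group_add \<Rightarrow> 'a) set \<Rightarrow> bool" where
  "aut_subgroup G \<longleftrightarrow> id \<in> G \<and> (\<forall>f\<in>G. endo f \<and> bij f \<and> inv f \<in> G)
     \<and> (\<forall>f\<in>G. \<forall>g\<in>G. f \<circ> g \<in> G)"

definition F_group :: "('a::group_add \<Rightarrow> 'a) set \<Rightarrow> bool" where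
  "F_group F \<longleftrightarrow> (\<forall>f\<in>F. endo f) \<and> zero_map \<in> F \<and> id \<in> F \<and> uminus \<in> F
     \<and> aut_subgroup (F - {zero_map})
     \<and> (\<forall>\<alpha>\<in>F. \<forall>\<beta>\<in>F. \<forall>x. \<alpha> x = \<beta> x \<longrightarrow> \<alpha> = \<beta> \<or> x = 0)"

definition quasi_kernel :: "('a::group_add \<Rightarrow> 'a) set \<Rightarrow> 'a set" where
  "quasi_kernel F = {u. \<forall>\<alpha>\<in>F. \<forall>\<beta>\<in>F. \<exists>\<gamma>\<in>F. \<alpha> u + \<beta> u = \<gamma> u}"

definition add_subgroup :: "'a::group_add set \<Rightarrow> bool" where
  "add_subgroup H \<longleftrightarrow> 0 \<in> H \<and> (\<forall>x\<in>H. \<forall>y\<in>H. x + y \<in> H) \<and> (\<forall>x\<in>H. - x \<in> H)"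

definition generated_subgroup :: "'a::group_add set \<Rightarrow> 'a set" where
  "generated_subgroup S = \<Inter>{H. add_subgroup H \<and> S \<subseteq> H}"

definition near_vector_space :: "('a::group_add \<Rightarrow> 'a) set \<Rightarrow> bool" where
  "near_vector_space F \<longleftrightarrow> F_group F \<and> generated_subgroup (quasi_kernel F) = UNIV"

definition F_commutative :: "('a \<Rightarrow> 'a) set \<Rightarrow> bool" where
  "F_commutative F \<longleftrightarrow> (\<forall>\<alpha>\<in>F. \<forall>\<beta>\<in>F. \<forall>v. \<alpha> (\<beta> v) = \<beta> (\<alpha> v))"

definition plus_at :: "('a::group_add \<Rightarrow> 'a) set \<Rightarrow> 'a \<Rightarrow> ('a \<Rightarrow> 'a) \<Rightarrow> ('a \<Rightarrow> 'a) \<Rightarrow> ('a \<Rightarrow> 'a)" where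
  "plus_at F u \<alpha> \<beta> = (THE \<gamma>. \<gamma> \<in> F \<and> \<alpha> u + \<beta> u = \<gamma> u)"

fun sum_at :: "('a::group_add \<Rightarrow> 'a) set \<Rightarrow> 'a \<Rightarrow> ('a \<Rightarrow> 'a) list \<Rightarrow> ('a \<Rightarrow> 'a)" where
  "sum_at F u [] = zero_map"
| "sum_at F u (\<alpha> # \<alpha>s) = foldl (plus_at F u) \<alpha> \<alpha>s"

end

theory Submission
  imports Defs
begin

lemma plus_at_prop:
  assumes FG: "F_group F" and w: "w \<in> quasi_kernel F" and w0: "w \<noteq> 0"
    and a: "\<alpha> \<in> F" and b: "\<beta> \<in> F"
  shows "plus_at F w \<alpha> \<beta> \<in> F \<and> \<alpha> w + \<beta> w = plus_at F w \<alpha> \<beta> w"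
proof -
  have ex: "\<exists>\<gamma>. \<gamma> \<in> F \<and> \<alpha> w + \<beta> w = \<gamma> w" using w a b unfolding quasi_kernel_def by blast
  have sep: "\<forall>\<alpha>\<in>F. \<forall>\<beta>\<in>F. \<forall>x. \<alpha> x = \<beta> x \<longrightarrow> \<alpha> = \<beta> \<or> x = 0"
    using FG unfolding F_group_def by blast
  have "\<exists>!\<gamma>. \<gamma> \<in> F \<and> \<alpha> w + \<beta> w = \<gamma> w"
    using ex sep w0 by metis
  from theI'[OF this] show ?thesis unfolding plus_at_def by blast
qed

lemma plus_at_eq:
  assumes FG: "F_group F" and w: "w \<in> quasi_kernel F" and w0: "w \<noteq> 0"
    and a: "\<alpha> \<in> F" and b: "\<beta> \<in> F" and g: "\<gamma> \<in> F" and e: "\<alpha> w + \<beta> w = \<gamma> w"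
  shows "plus_at F w \<alpha> \<beta> = \<gamma>"
proof -
  have sep: "\<forall>\<alpha>\<in>F. \<forall>\<beta>\<in>F. \<forall>x. \<alpha> x = \<beta> x \<longrightarrow> \<alpha> = \<beta> \<or> x = 0"
    using FG unfolding F_group_def by blast
  from plus_at_prop[OF FG w w0 a b] e g sep w0 show ?thesis by metis
qed

theorem mainTheorem7:
  fixes F :: "('a::group_add \<Rightarrow> 'a) set" and u v :: 'a
  assumes "near_vector_space F"
    and "F_commutative F"
    and "u \<in> quasi_kernel F" and "u \<noteq> 0"
    and "v \<in> quasi_kernel F" and "v \<noteq> 0"
    and "\<forall>\<alpha>s. \<alpha>s \<noteq> [] \<and> set \<alpha>s \<subseteq> F \<longrightarrow>
           (sum_at F u \<alpha>s = zero_map \<longleftrightarrow> sum_at F v \<alpha>s = zero_map)"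
  shows "\<forall>\<alpha>\<in>F. \<forall>\<beta>\<in>F. plus_at F u \<alpha> \<beta> = plus_at F v \<alpha> \<beta>"
proof (intro ballI)
  fix \<alpha> \<beta> assume a: "\<alpha> \<in> F" and b: "\<beta> \<in> F"
  have FG: "F_group F" using assms(1) unfolding near_vector_space_def by blast
  have zF: "zero_map \<in> F" and mF: "uminus \<in> F" using FG unfolding F_group_def by auto
  have AS: "aut_subgroup (F - {zero_map})" using FG unfolding F_group_def by blast
  define \<gamma> where "\<gamma> = plus_at F u \<alpha> \<beta>"
  have g: "\<gamma> \<in> F" and ge: "\<alpha> u + \<beta> u = \<gamma> u"
    using plus_at_prop[OF FG assms(3,4) a b] unfolding \<gamma>_def by auto
  have mg: "uminus \<circ> \<gamma> \<in> F"
  proof (cases "\<gamma> = zero_map")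
    case True
    then have "uminus \<circ> \<gamma> = zero_map" by (auto simp: zero_map_def)
    then show ?thesis using zF by simp
  next
    case False
    have "uminus \<noteq> (zero_map :: 'a \<Rightarrow> 'a)"
    proof
      assume "uminus = (zero_map :: 'a \<Rightarrow> 'a)"
      then have "- u = 0" by (metis zero_map_def)
      then show False using assms(4) by simp
    qed
    then show ?thesis using AS False g mF unfolding aut_subgroup_def by blast
  qed
  have sU: "sum_at F u [\<alpha>, \<beta>, uminus \<circ> \<gamma>] = zero_map"
  proof -
    have "sum_at F u [\<alpha>, \<beta>, uminus \<circ> \<gamma>] = plus_at F u \<gamma> (uminus \<circ> \<gamma>)"
      by (simp add: \<gamma>_def)
    also have "\<dots> = zero_map"
      by (rule plus_at_eq[OF FG assms(3,4) g mg zF]) (simp add: zero_map_def)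
    finally show ?thesis .
  qed
  hence sV: "sum_at F v [\<alpha>, \<beta>, uminus \<circ> \<gamma>] = zero_map"
  proof -
    have "[\<alpha>, \<beta>, uminus \<circ> \<gamma>] \<noteq> [] \<and> set [\<alpha>, \<beta>, uminus \<circ> \<gamma>] \<subseteq> F" using a b mg by simp
    with assms(7) \<open>sum_at F u [\<alpha>, \<beta>, uminus \<circ> \<gamma>] = zero_map\<close> show ?thesis by blast
  qed
  define \<delta> where "\<delta> = plus_at F v \<alpha> \<beta>"
  have d: "\<delta> \<in> F" using plus_at_prop[OF FG assms(5,6) a b] unfolding \<delta>_def by auto
  have "plus_at F v \<delta> (uminus \<circ> \<gamma>) = zero_map" using sV by (simp add: \<delta>_def)
  with plus_at_prop[OF FG assms(5,6) d mg]
  have "\<delta> v + - \<gamma> v = 0" by (simp add: zero_map_def)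
  hence "\<delta> v = \<gamma> v" by (simp add: add_eq_0_iff2 eq_neg_iff_add_eq_0)
  hence "\<delta> = \<gamma>" using FG d g assms(6) unfolding F_group_def by blast
  thus "plus_at F u \<alpha> \<beta> = plus_at F v \<alpha> \<beta>" by (simp add: \<gamma>_def \<delta>_def)
qed

end
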